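(* Let $q$ be a prime power, let $V$ be a $v$-dimensional vector space over $\mathrm{GF}(q)$, and let $\mathcal{G}$ be a $(g-1)$-spread of $V$, i.e. a set of $g$-dimensional subspaces of $V$ such that every $1$-dimensional subspace of $V$ is contained in exactly one element of $\mathcal{G}$. Let $L$ be a $2$-dimensional subspace of $V$ that is not contained in any element of $\mathcal{G}$. Then the number of $3$-dimensional subspaces of $V$ which contain $L$ and which are scattered with respect to $\mathcal{G}$ equals \[ \lambda_{\max}=\begin{bmatrix} v-2\\ 1\end{bmatrix}_q-\begin{bmatrix} 2\\ 1\end{bmatrix}_q\begin{bmatrix} g-1\\ 1\end{bmatrix}_q . \] In particular, this number does not depend on $L$.
   Context: For integers $0\le m\le n$, the Gaussian coefficient is $\begin{bmatrix} n\\ m\end{bmatrix}_q=\prod_{i=0}^{m-1}\frac{q^{n-i}-1}{q^{m-i}-1}$, the number of $m$-dimensional subspaces of an $n$-dimensional $\mathrm{GF}(q)$-vector space. A subspace $B\le V$ is called scattered with respect to the spread $\mathcal{G}$ if $B$ contains no $2$-dimensional subspace that is contained in some element of $\mathcal{G}$ (equivalently, $\dim(B\cap S)\le 1$ for every $S\in\mathcal{G}$). *)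

theory Defs
  imports "HOL-Analysis.Analysis"
begin

definition gauss_binom :: "nat \<Rightarrow> nat \<Rightarrow> nat \<Rightarrow> real" where
  "gauss_binom q n m = (\<Prod>i<m. (real q ^ (n - i) - 1) / (real q ^ (m - i) - 1))"

definition is_spread :: "nat \<Rightarrow> ('a::field ^ 'n) set set \<Rightarrow> bool" where
  "is_spread g G \<longleftrightarrow>
     (\<forall>S\<in>G. vec.subspace S \<and> vec.dim S = g) \<and>
     (\<forall>P. vec.subspace P \<and> vec.dim P = 1 \<longrightarrow> (\<exists>!S. S \<in> G \<and> P \<subseteq> S))"

definition scattered :: "('a::field ^ 'n) set set \<Rightarrow> ('a ^ 'n) set \<Rightarrow> bool" where
  "scattered G B \<longleftrightarrow>
     \<not> (\<exists>W. vec.subspace W \<and> vec.dim W = 2 \<and> W \<subseteq> B \<and> (\<exists>S\<in>G. W \<subseteq> S))"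

end

theory Submission
  imports Defs
begin


lemma card_subspace:
  fixes U :: "('a::{field,finite}^'n) set"
  assumes U: "vec.subspace U" shows "card U = CARD('a) ^ vec.dim U"
proof -
  obtain B where B: "B \<subseteq> U" "vec.independent B" "U \<subseteq> vec.span B" "card B = vec.dim U"
    using vec.basis_exists by blast
  have fB: "finite B" by simp
  have UB: "vec.span B = U" using B U by (metis vec.span_subspace)
  define h where "h c = (\<Sum>v\<in>B. c v *s v)" for c :: "'a^'n \<Rightarrow> 'a"
  have inj: "inj_on h (PiE B (\<lambda>_. UNIV))"
  proof (rule inj_onI)
    fix c c' assume c: "c \<in> PiE B (\<lambda>_. UNIV)" and c': "c' \<in> PiE B (\<lambda>_. UNIV)" and e: "h c = h c'"
    have "(\<Sum>v\<in>B. (c v - c' v) *s v) = 0"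
      using e by (simp add: h_def vec.scale_left_diff_distrib sum_subtractf)
    then have "\<forall>v\<in>B. c v - c' v = 0"
      using B(2)[unfolded vec.independent_explicit, THEN conjunct2, rule_format, of "\<lambda>v. c v - c' v"] by simp
    then show "c = c'" using c c' by (intro PiE_ext) auto
  qed
  have img: "h ` PiE B (\<lambda>_. UNIV) = U"
  proof
    show "h ` PiE B (\<lambda>_. UNIV) \<subseteq> U"
    proof -
      have "h c \<in> vec.span B" for c unfolding h_def
        by (intro vec.span_sum vec.span_scale vec.span_base) auto
      then show ?thesis using UB by auto
    qed
    show "U \<subseteq> h ` PiE B (\<lambda>_. UNIV)"
    proof
      fix x assume "x \<in> U"
      then have "x \<in> vec.span B" using UB by simp
      then obtain u where x: "x = (\<Sum>v\<in>B. u v *s v)" using vec.span_finite[OF fB] by auto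
      have "h (restrict u B) = x" unfolding h_def x by (rule sum.cong) auto
      moreover have "restrict u B \<in> PiE B (\<lambda>_. UNIV)" by auto
      ultimately show "x \<in> h ` PiE B (\<lambda>_. UNIV)" by blast
    qed
  qed
  have "card U = card (PiE B (\<lambda>_. UNIV :: 'a set))"
    using card_image[OF inj] img by simp
  also have "\<dots> = CARD('a) ^ card B" using card_PiE[OF fB, of "\<lambda>_. UNIV :: 'a set"] by simp
  finally show ?thesis using B(4) by simp
qed

lemma count_ext:
  fixes A U :: "('a::{field,finite}^'n) set"
  assumes A: "vec.subspace A" and U: "vec.subspace U" and AU: "A \<subseteq> U"
  shows "card {B. vec.subspace B \<and> A \<subseteq> B \<and> B \<subseteq> U \<and> vec.dim B = Suc (vec.dim A)}
           * (CARD('a) ^ Suc (vec.dim A) - CARD('a) ^ vec.dim A)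
         = CARD('a) ^ vec.dim U - CARD('a) ^ vec.dim A"
proof -
  define F where "F = {B. vec.subspace B \<and> A \<subseteq> B \<and> B \<subseteq> U \<and> vec.dim B = Suc (vec.dim A)}"
  have key: "B = vec.span (insert x A)" if B: "B \<in> F" and x: "x \<in> B - A" for B x
  proof -
    have sA: "vec.span A = A" using A by simp
    have xn: "x \<notin> vec.span A" using x A by (metis DiffD2 vec.span_eq_iff)
    have d: "vec.dim (vec.span (insert x A)) = Suc (vec.dim A)"
      using xn by (simp add: vec.dim_insert)
    have "vec.span (insert x A) \<subseteq> B" using B x unfolding F_def
      by (intro vec.span_minimal) auto
    then show ?thesis using B d unfolding F_def
      by (metis (mono_tags, lifting) mem_Collect_eq order_refl vec.subspace_dim_equal vec.subspace_span)
  qed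
  have UN: "U - A = (\<Union>B\<in>F. B - A)"
  proof
    show "U - A \<subseteq> (\<Union>B\<in>F. B - A)"
    proof
      fix x assume x: "x \<in> U - A"
      have sA: "vec.span A = A" using A by simp
      let ?B = "vec.span (insert x A)"
      have xn: "x \<notin> vec.span A" using x A by (metis DiffD2 vec.span_eq_iff)
      have "?B \<subseteq> U" using x AU U by (intro vec.span_minimal) auto
      then have "?B \<in> F" unfolding F_def using x AU U xn
        by (auto simp: vec.dim_insert intro!: vec.span_base)
      moreover have "x \<in> ?B - A" using x by (auto intro: vec.span_base)
      ultimately show "x \<in> (\<Union>B\<in>F. B - A)" by blast
    qed
    show "(\<Union>B\<in>F. B - A) \<subseteq> U - A" unfolding F_def by auto
  qed
  have "card (U - A) = (\<Sum>B\<in>F. card (B - A))"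
    unfolding UN
  proof (rule card_UN_disjoint)
    show "\<forall>i\<in>F. \<forall>j\<in>F. i \<noteq> j \<longrightarrow> (i - A) \<inter> (j - A) = {}"
      using key by blast
  qed auto
  also have "\<dots> = (\<Sum>B\<in>F. CARD('a) ^ Suc (vec.dim A) - CARD('a) ^ vec.dim A)"
  proof (rule sum.cong)
    fix B assume B: "B \<in> F"
    then have "card (B - A) = card B - card A" unfolding F_def
      by (intro card_Diff_subset) auto
    then show "card (B - A) = CARD('a) ^ Suc (vec.dim A) - CARD('a) ^ vec.dim A"
      using B A unfolding F_def by (simp add: card_subspace)
  qed simp
  also have "\<dots> = card F * (CARD('a) ^ Suc (vec.dim A) - CARD('a) ^ vec.dim A)" by simp
  finally have "card F * (CARD('a) ^ Suc (vec.dim A) - CARD('a) ^ vec.dim A) = card (U - A)" by simp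
  also have "\<dots> = card U - card A" using AU by (intro card_Diff_subset) auto
  also have "\<dots> = CARD('a) ^ vec.dim U - CARD('a) ^ vec.dim A" using A U by (simp add: card_subspace)
  finally show ?thesis unfolding F_def .
qed

lemma dim_int_ge:
  fixes X Y Z :: "('a::field^'n) set"
  assumes "vec.subspace X" "vec.subspace Y" "vec.subspace Z" "X \<subseteq> Z" "Y \<subseteq> Z"
  shows "vec.dim X + vec.dim Y \<le> vec.dim Z + vec.dim (X \<inter> Y)"
proof -
  have "{x + y |x y. x \<in> X \<and> y \<in> Y} \<subseteq> Z" using assms by (auto intro: vec.subspace_add)
  then have "vec.dim {x + y |x y. x \<in> X \<and> y \<in> Y} \<le> vec.dim Z" by (rule vec.dim_subset)
  then show ?thesis using vec.dim_sums_Int[OF assms(1,2)] by linarith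
qed

lemma nonzero_of_dim:
  fixes X :: "('a::field^'n) set"
  assumes "vec.subspace X" "1 \<le> vec.dim X"
  obtains x where "x \<in> X" "x \<noteq> 0"
proof -
  have "\<not> X \<subseteq> {0}"
  proof
    assume "X \<subseteq> {0}"
    then have "vec.dim X \<le> vec.dim {0::'a^'n}" by (rule vec.dim_subset)
    moreover have "vec.dim {0::'a^'n} = 0" by simp
    ultimately show False using assms by linarith
  qed
  then show ?thesis using that by blast
qed

lemma point_span:
  fixes x :: "'a::field^'n"
  assumes "x \<noteq> 0"
  shows "vec.subspace (vec.span {x})" "vec.dim (vec.span {x}) = 1"
  using assms by auto

lemma gb1: "q \<ge> 2 \<Longrightarrow> gauss_binom q n 1 = (real q ^ n - 1) / (real q - 1)"
  by (simp add: gauss_binom_def)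

theorem lemma3:
  fixes G :: "('a::{field,finite} ^ 'n) set set"
    and L :: "('a ^ 'n) set"
    and g :: nat
  assumes spread: "is_spread g G"
    and L_sub: "vec.subspace L" and L_dim: "vec.dim L = 2"
    and L_not: "\<forall>S\<in>G. \<not> L \<subseteq> S"
  shows "real (card {B. vec.subspace B \<and> vec.dim B = 3 \<and> L \<subseteq> B \<and> scattered G B}) =
           gauss_binom CARD('a) (CARD('n) - 2) 1
           - gauss_binom CARD('a) 2 1 * gauss_binom CARD('a) (g - 1) 1"
proof -
  define q where "q = CARD('a)"
  define v where "v = CARD('n)"
  have Gs: "\<And>S. S \<in> G \<Longrightarrow> vec.subspace S \<and> vec.dim S = g" using spread unfolding is_spread_def by blast
  have Gu: "\<And>P. vec.subspace P \<Longrightarrow> vec.dim P = 1 \<Longrightarrow> \<exists>!S. S \<in> G \<and> P \<subseteq> S"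
    using spread unfolding is_spread_def by blast
  define SP where "SP P = (THE S. S \<in> G \<and> P \<subseteq> S)" for P
  have SP: "SP P \<in> G \<and> P \<subseteq> SP P" if "vec.subspace P" "vec.dim P = 1" for P
    unfolding SP_def using theI'[OF Gu[OF that]] .
  have SPu: "S = SP P" if "vec.subspace P" "vec.dim P = 1" "S \<in> G" "P \<subseteq> S" for P S
    unfolding SP_def using the1_equality[OF Gu[OF that(1,2)]] that(3,4) by simp
  have LS: "vec.dim (L \<inter> S) \<le> 1" if S: "S \<in> G" for S
  proof (rule ccontr)
    assume "\<not> ?thesis"
    then have "L \<inter> S = L" using L_sub Gs[OF S] L_dim
      by (intro vec.subspace_dim_equal) (auto intro: vec.subspace_inter)
    then show False using L_not S by blast
  qed
  define Pts where "Pts = {P. vec.subspace P \<and> vec.dim P = 1 \<and> P \<subseteq> L}"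
  define T where "T = {B. vec.subspace B \<and> vec.dim B = 3 \<and> L \<subseteq> B}"
  define N where "N P = {B\<in>T. \<exists>W. vec.subspace W \<and> vec.dim W = 2 \<and> W \<subseteq> B \<and> W \<subseteq> SP P}" for P
  define M where "M P = {W. vec.subspace W \<and> P \<subseteq> W \<and> W \<subseteq> SP P \<and> vec.dim W = Suc (vec.dim P)}" for P
  define Sc where "Sc = {B. vec.subspace B \<and> vec.dim B = 3 \<and> L \<subseteq> B \<and> scattered G B}"
  define NS where "NS = {B\<in>T. \<not> scattered G B}"
  have cT: "card T * (q ^ 3 - q ^ 2) = q ^ v - q ^ 2"
  proof -
    have "T = {B. vec.subspace B \<and> L \<subseteq> B \<and> B \<subseteq> UNIV \<and> vec.dim B = Suc (vec.dim L)}"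
      unfolding T_def using L_dim by auto
    then show ?thesis using count_ext[OF L_sub vec.subspace_UNIV] L_dim
      by (simp add: q_def v_def card_cart_basis numeral_eq_Suc)
  qed
  have cPts: "card Pts * (q - 1) = q ^ 2 - 1"
  proof -
    have "Pts = {B. vec.subspace B \<and> {0} \<subseteq> B \<and> B \<subseteq> L \<and> vec.dim B = Suc (vec.dim {0::'a^'n})}"
      unfolding Pts_def by (auto intro: vec.subspace_0)
    then show ?thesis using count_ext[OF vec.subspace_single_0 L_sub] L_dim vec.subspace_0[OF L_sub]
      by (simp add: q_def)
  qed
  have Pf: "SP P \<in> G \<and> P \<subseteq> SP P \<and> vec.subspace (SP P) \<and> vec.dim (SP P) = g \<and> L \<inter> SP P = P
            \<and> vec.subspace P \<and> vec.dim P = 1 \<and> P \<subseteq> L" if P: "P \<in> Pts" for P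
  proof -
    have P1: "vec.subspace P" "vec.dim P = 1" "P \<subseteq> L" using P unfolding Pts_def by auto
    have S: "SP P \<in> G" "P \<subseteq> SP P" using SP[OF P1(1,2)] by auto
    have "P = L \<inter> SP P"
      using P1 S LS[OF S(1)] Gs[OF S(1)] L_sub
      by (intro vec.subspace_dim_equal) (auto intro: vec.subspace_inter)
    then show ?thesis using P1 S Gs[OF S(1)] by auto
  qed
  have B2: "vec.dim (B \<inter> SP P) \<le> 2" if P: "P \<in> Pts" and B: "B \<in> T" for P B
  proof (rule ccontr)
    assume "\<not> ?thesis"
    then have "B \<inter> SP P = B" using Pf[OF P] B unfolding T_def
      by (intro vec.subspace_dim_equal) (auto intro: vec.subspace_inter)
    then have "L \<subseteq> SP P" using B unfolding T_def by auto
    then show False using L_not Pf[OF P] by blast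
  qed
  define ss where "ss X Y = {x + y |x y. x \<in> X \<and> y \<in> Y}" for X Y :: "('a^'n) set"
  have ss1: "X \<subseteq> ss X Y" "Y \<subseteq> ss X Y" if "vec.subspace X" "vec.subspace Y" for X Y
    unfolding ss_def using vec.subspace_0[OF that(1)] vec.subspace_0[OF that(2)] by force+
  have ss2: "ss X Y \<subseteq> Z" if "vec.subspace Z" "X \<subseteq> Z" "Y \<subseteq> Z" for X Y Z
    unfolding ss_def using that by (auto intro: vec.subspace_add)
  have ss3: "vec.subspace (ss X Y)" if "vec.subspace X" "vec.subspace Y" for X Y
    unfolding ss_def using vec.subspace_sums[OF that] .
  have ss4: "vec.dim (ss X Y) + vec.dim (X \<inter> Y) = vec.dim X + vec.dim Y"
    if "vec.subspace X" "vec.subspace Y" for X Y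
    unfolding ss_def using vec.dim_sums_Int[OF that] .
  have cN: "card (N P) = card (M P)" if P: "P \<in> Pts" for P
  proof -
    note pf = Pf[OF P]
    let ?S = "SP P"
    have toM: "B \<inter> ?S \<in> M P" if B: "B \<in> N P" for B
    proof -
      obtain W where W: "vec.subspace W" "vec.dim W = 2" "W \<subseteq> B" "W \<subseteq> ?S" and BT: "B \<in> T"
        using B unfolding N_def by blast
      have "vec.dim W \<le> vec.dim (B \<inter> ?S)" using W by (intro vec.dim_subset) auto
      then have "vec.dim (B \<inter> ?S) = 2" using B2[OF P BT] W by linarith
      then show ?thesis using pf BT unfolding M_def T_def by (auto intro: vec.subspace_inter)
    qed
    have rec: "B = ss L (B \<inter> ?S)" if B: "B \<in> N P" for B
    proof -
      have BT: "B \<in> T" using B unfolding N_def by blast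
      have BS: "vec.subspace (B \<inter> ?S)" "vec.dim (B \<inter> ?S) = 2"
        using toM[OF B] pf unfolding M_def by auto
      have "L \<inter> (B \<inter> ?S) = P" using pf BT unfolding T_def by blast
      then have d: "vec.dim (ss L (B \<inter> ?S)) = 3" using ss4[OF L_sub BS(1)] L_dim BS pf by simp
      have "ss L (B \<inter> ?S) = B" using BT d L_sub BS unfolding T_def
        by (intro vec.subspace_dim_equal ss3 ss2) auto
      then show ?thesis by simp
    qed
    have "bij_betw (\<lambda>B. B \<inter> ?S) (N P) (M P)"
    proof (rule bij_betw_imageI)
      show "inj_on (\<lambda>B. B \<inter> ?S) (N P)"
        by (rule inj_onI) (metis rec)
      show "(\<lambda>B. B \<inter> ?S) ` N P = M P"
      proof
        show "(\<lambda>B. B \<inter> ?S) ` N P \<subseteq> M P" using toM by blast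
        show "M P \<subseteq> (\<lambda>B. B \<inter> ?S) ` N P"
        proof
          fix W assume W: "W \<in> M P"
          then have Wf: "vec.subspace W" "P \<subseteq> W" "W \<subseteq> ?S" "vec.dim W = 2"
            using pf unfolding M_def by auto
          define B where "B = ss L W"
          have LW: "L \<inter> W = P" using pf Wf by blast
          have dB: "vec.dim B = 3" using ss4[OF L_sub Wf(1)] L_dim Wf pf LW unfolding B_def by simp
          have BT: "B \<in> T" unfolding T_def B_def using dB ss1[OF L_sub Wf(1)] ss3[OF L_sub Wf(1)]
            by (simp add: B_def)
          have BN: "B \<in> N P" unfolding N_def using BT Wf ss1[OF L_sub Wf(1)] B_def by blast
          have "W = B \<inter> ?S" using Wf B2[OF P BT] ss1[OF L_sub Wf(1)] pf BT unfolding B_def T_def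
            by (intro vec.subspace_dim_equal) (auto intro: vec.subspace_inter)
          then show "W \<in> (\<lambda>B. B \<inter> ?S) ` N P" using BN by blast
        qed
      qed
    qed
    then show ?thesis by (rule bij_betw_same_card)
  qed
  have cM: "card (M P) * (q ^ 2 - q) = q ^ g - q" if P: "P \<in> Pts" for P
    using count_ext[of P "SP P"] Pf[OF P] unfolding M_def by (simp add: q_def power2_eq_square)
  have NSU: "NS = (\<Union>P\<in>Pts. N P)"
  proof
    show "NS \<subseteq> (\<Union>P\<in>Pts. N P)"
    proof
      fix B assume B: "B \<in> NS"
      then have BT: "B \<in> T" and "\<not> scattered G B" unfolding NS_def by auto
      then obtain W S where W: "vec.subspace W" "vec.dim W = 2" "W \<subseteq> B" "S \<in> G" "W \<subseteq> S"
        unfolding scattered_def by blast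
      have Bf: "vec.subspace B" "vec.dim B = 3" "L \<subseteq> B" using BT unfolding T_def by auto
      have "vec.dim W + vec.dim L \<le> vec.dim B + vec.dim (W \<inter> L)"
        using W Bf L_sub by (intro dim_int_ge) auto
      then have "1 \<le> vec.dim (W \<inter> L)" using W Bf L_dim by linarith
      then obtain x where x: "x \<in> W \<inter> L" "x \<noteq> 0"
        by (rule nonzero_of_dim[OF vec.subspace_inter[OF W(1) L_sub]])
      define P where "P = vec.span {x}"
      have Ps: "vec.subspace P" "vec.dim P = 1" using point_span[OF x(2)] unfolding P_def by auto
      have PW1: "P \<subseteq> W" unfolding P_def using x W(1) by (intro vec.span_minimal) auto
      have PW2: "P \<subseteq> L" unfolding P_def using x L_sub by (intro vec.span_minimal) auto
      note PW = PW1 PW2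
      have PP: "P \<in> Pts" unfolding Pts_def using Ps PW by auto
      have "P \<subseteq> S" using PW1 W(5) by (rule subset_trans)
      then have "S = SP P" using SPu[OF Ps W(4)] by simp
      then have "B \<in> N P" unfolding N_def using BT W by blast
      then show "B \<in> (\<Union>P\<in>Pts. N P)" using PP by blast
    qed
    show "(\<Union>P\<in>Pts. N P) \<subseteq> NS"
    proof
      fix B assume "B \<in> (\<Union>P\<in>Pts. N P)"
      then obtain P where P: "P \<in> Pts" "B \<in> N P" by blast
      then obtain W where W: "vec.subspace W" "vec.dim W = 2" "W \<subseteq> B" "W \<subseteq> SP P" and BT: "B \<in> T"
        unfolding N_def by blast
      have "SP P \<in> G" using Pf[OF P(1)] by simp
      then have "\<not> scattered G B" unfolding scattered_def using W by blast
      then show "B \<in> NS" unfolding NS_def using BT by simp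
    qed
  qed
  have disj: "N P \<inter> N P' = {}" if P: "P \<in> Pts" and P': "P' \<in> Pts" and ne: "P \<noteq> P'" for P P'
  proof (rule ccontr)
    assume "N P \<inter> N P' \<noteq> {}"
    then obtain B where B: "B \<in> N P" "B \<in> N P'" by blast
    have B1: "B \<in> T \<and> (\<exists>W. vec.subspace W \<and> vec.dim W = 2 \<and> W \<subseteq> B \<and> W \<subseteq> SP P)"
      using B(1) by (simp only: N_def mem_Collect_eq)
    have B2: "\<exists>W. vec.subspace W \<and> vec.dim W = 2 \<and> W \<subseteq> B \<and> W \<subseteq> SP P'"
      using B(2) by (simp only: N_def mem_Collect_eq)
    have BT: "B \<in> T" using B1 by (rule conjunct1)
    obtain W where "vec.subspace W \<and> vec.dim W = 2 \<and> W \<subseteq> B \<and> W \<subseteq> SP P"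
      using conjunct2[OF B1] by (elim exE)
    then have W: "vec.subspace W" "vec.dim W = 2" "W \<subseteq> B" "W \<subseteq> SP P" by simp_all
    obtain W' where "vec.subspace W' \<and> vec.dim W' = 2 \<and> W' \<subseteq> B \<and> W' \<subseteq> SP P'"
      using B2 by (elim exE)
    then have W': "vec.subspace W'" "vec.dim W' = 2" "W' \<subseteq> B" "W' \<subseteq> SP P'" by simp_all
    have Bf: "vec.subspace B" "vec.dim B = 3" using BT unfolding T_def by auto
    have "vec.dim W + vec.dim W' \<le> vec.dim B + vec.dim (W \<inter> W')"
      using W W' Bf by (intro dim_int_ge) auto
    then have "1 \<le> vec.dim (W \<inter> W')" using W W' Bf by linarith
    then obtain x where x: "x \<in> W \<inter> W'" "x \<noteq> 0"
      by (rule nonzero_of_dim[OF vec.subspace_inter[OF W(1) W'(1)]])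
    define Q where "Q = vec.span {x}"
    have Qs: "vec.subspace Q" "vec.dim Q = 1" using point_span[OF x(2)] unfolding Q_def by auto
    have sP1: "vec.subspace (SP P)" using Pf[OF P] by blast
    have sP2: "vec.subspace (SP P')" using Pf[OF P'] by blast
    have xs1: "x \<in> SP P" using x W(4) by blast
    have xs2: "x \<in> SP P'" using x W'(4) by blast
    have QS1: "Q \<subseteq> SP P" unfolding Q_def using xs1 sP1 by (intro vec.span_minimal) auto
    have QS2: "Q \<subseteq> SP P'" unfolding Q_def using xs2 sP2 by (intro vec.span_minimal) auto
    note QS = QS1 QS2
    have G1: "SP P \<in> G" using Pf[OF P] by (rule conjunct1)
    have G2: "SP P' \<in> G" using Pf[OF P'] by (rule conjunct1)
    have e1: "SP P = SP Q" by (rule SPu[OF Qs G1 QS1])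
    have e2: "SP P' = SP Q" by (rule SPu[OF Qs G2 QS2])
    have l1: "L \<inter> SP P = P" using Pf[OF P] by blast
    have l2: "L \<inter> SP P' = P'" using Pf[OF P'] by blast
    have "P = P'" using l1 l2 e1 e2 by metis
    then show False using ne by simp
  qed
  have cNS: "card NS = (\<Sum>P\<in>Pts. card (N P))"
    unfolding NSU by (rule card_UN_disjoint) (use disj in auto)
  have ScT: "Sc = T - NS" "NS \<subseteq> T" unfolding Sc_def T_def NS_def by auto
  have cSc: "card Sc = card T - card NS" using ScT by (simp add: card_Diff_subset)
  have cNSle: "card NS \<le> card T" using ScT by (simp add: card_mono)
  have q2: "2 \<le> q"
  proof -
    have "card {0::'a, 1} \<le> q" unfolding q_def by (rule card_mono) auto
    then show ?thesis by simp
  qed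
  obtain P0 where P0: "P0 \<in> Pts"
  proof -
    have "card Pts \<noteq> 0"
    proof
      assume "card Pts = 0"
      then have "q ^ 2 - 1 = 0" using cPts by simp
      moreover have "4 \<le> q ^ 2" using q2 power_mono[OF q2, of 2] by simp
      ultimately show False by simp
    qed
    then have "Pts \<noteq> {}" by (metis card.empty)
    then show ?thesis using that by blast
  qed
  have g1: "1 \<le> g"
  proof -
    have "vec.dim P0 \<le> vec.dim (SP P0)" using Pf[OF P0] by (intro vec.dim_subset) blast
    then show ?thesis using Pf[OF P0] by simp
  qed
  obtain g' where g': "g = Suc g'" using g1 by (cases g) auto
  have v2: "2 \<le> v"
  proof -
    have "vec.dim L \<le> vec.dim (UNIV :: ('a^'n) set)" by (rule vec.dim_subset) simp
    then show ?thesis using L_dim by (simp add: v_def card_cart_basis)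
  qed
  obtain v' where v': "v = v' + 2" using v2 by (metis add.commute le_Suc_ex)
  define Q where "Q = real q"
  have Q2: "Q \<ge> 2" unfolding Q_def using q2 by simp
  have q1: "1 \<le> q" using q2 by simp
  have rT: "real (card T) = (Q ^ v' - 1) / (Q - 1)"
  proof -
    have a: "q ^ 2 \<le> q ^ 3" "q ^ 2 \<le> q ^ v" using q1 v2 by (auto intro: power_increasing)
    have "real (card T * (q ^ 3 - q ^ 2)) = real (q ^ v - q ^ 2)" using cT by simp
    then have "real (card T) * (Q ^ 3 - Q ^ 2) = Q ^ (v' + 2) - Q ^ 2"
      using a unfolding Q_def v' by (simp add: of_nat_diff)
    then have "real (card T) * (Q ^ 2 * (Q - 1)) = Q ^ 2 * (Q ^ v' - 1)"
      by (simp add: algebra_simps power_add power3_eq_cube power2_eq_square)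
    then have "real (card T) * (Q - 1) = Q ^ v' - 1" using Q2
      by (simp add: mult.left_commute)
    then show ?thesis using Q2 by (simp add: field_simps)
  qed
  have rPts: "real (card Pts) = Q + 1"
  proof -
    have a: "1 \<le> q" "1 \<le> q ^ 2" using q1 by auto
    have "real (card Pts * (q - 1)) = real (q ^ 2 - 1)" using cPts by simp
    then have "real (card Pts) * (Q - 1) = Q ^ 2 - 1" using a unfolding Q_def by (simp add: of_nat_diff)
    then have "real (card Pts) * (Q - 1) = (Q + 1) * (Q - 1)" by (simp add: algebra_simps power2_eq_square)
    then show ?thesis using Q2 by simp
  qed
  have rM: "real (card (M P)) = (Q ^ g' - 1) / (Q - 1)" if P: "P \<in> Pts" for P
  proof -
    have a: "q \<le> q ^ 2" "q \<le> q ^ g" using q1 g1 by (auto intro: power_increasing[of 1, simplified])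
    have "real (card (M P) * (q ^ 2 - q)) = real (q ^ g - q)" using cM[OF P] by simp
    then have "real (card (M P)) * (Q ^ 2 - Q) = Q ^ Suc g' - Q"
      using a unfolding Q_def g' by (simp add: of_nat_diff)
    then have "real (card (M P)) * (Q - 1) * Q = (Q ^ g' - 1) * Q"
      by (simp add: algebra_simps power2_eq_square)
    then have "real (card (M P)) * (Q - 1) = Q ^ g' - 1" using Q2 by simp
    then show ?thesis using Q2 by (simp add: field_simps)
  qed
  have rNS: "real (card NS) = (Q + 1) * ((Q ^ g' - 1) / (Q - 1))"
  proof -
    have "real (card NS) = (\<Sum>P\<in>Pts. real (card (M P)))" using cNS cN by simp
    also have "\<dots> = (\<Sum>P\<in>Pts. (Q ^ g' - 1) / (Q - 1))" using rM by (intro sum.cong) auto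
    also have "\<dots> = (Q + 1) * ((Q ^ g' - 1) / (Q - 1))" using rPts by simp
    finally show ?thesis .
  qed
  have "real (card Sc) = real (card T) - real (card NS)" using cSc cNSle by (simp add: of_nat_diff)
  also have "\<dots> = (Q ^ v' - 1) / (Q - 1) - (Q + 1) * ((Q ^ g' - 1) / (Q - 1))" using rT rNS by simp
  also have "\<dots> = gauss_binom CARD('a) (CARD('n) - 2) 1
           - gauss_binom CARD('a) 2 1 * gauss_binom CARD('a) (g - 1) 1"
  proof -
    have e: "(Q ^ 2 - 1) / (Q - 1) = Q + 1" using Q2 by (simp add: field_simps power2_eq_square)
    show ?thesis using q2 e unfolding gb1[OF q2[unfolded q_def]]
      by (simp add: Q_def q_def v_def[symmetric] v' g')
  qed
  finally show ?thesis unfolding Sc_def .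
qed

end
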